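(* Let $g$ be a real-valued function on the primes with $0\le g(p)\le\beta$ for all primes $p$, for some constant $\beta$. Assume that for some $c>0$ and each $\varepsilon$ with $0<\varepsilon<1$, \[ \liminf_{x\to\infty}(\varepsilon\log x)^{-1}\sum_{x^{1-\varepsilon}<p\le x}p^{-1}g(p)\log p\ \ge\ c . \] Then for each $\alpha$ with $0<\alpha<c$ there is a subsequence of the primes, whose members are denoted $r$, such that \[ \lim_{x\to\infty}(\log x)^{-1}\sum_{r\le x} r^{-1}g(r)\log r=\alpha . \]
   Context: Sums indexed by $p$ run over primes; the sum over $r\le x$ runs over the members of the chosen subsequence of primes not exceeding $x$. *)

theory Defs
  imports "HOL-Analysis.Analysis" "HOL-Computational_Algebra.Primes"
begin

end

theory Submission imports Defs begin

fun Tacc :: "(nat \<Rightarrow> real) \<Rightarrow> real \<Rightarrow> nat \<Rightarrow> real" where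
  "Tacc a \<alpha> 0 = 0"
| "Tacc a \<alpha> (Suc n) = Tacc a \<alpha> n + (if prime n \<and> Tacc a \<alpha> n < \<alpha> * ln n then a n else 0)"

definition RR :: "(nat \<Rightarrow> real) \<Rightarrow> real \<Rightarrow> nat set" where
  "RR a \<alpha> = {n. prime n \<and> Tacc a \<alpha> n < \<alpha> * ln n}"

definition SS :: "(nat \<Rightarrow> real) \<Rightarrow> real \<Rightarrow> real \<Rightarrow> real" where
  "SS a t x = (\<Sum>p\<in>{p. prime p \<and> t < real p \<and> real p \<le> x}. a p)"

lemma finite_le_real: "finite {r::nat. real r \<le> x}"
proof -
  have "{r::nat. real r \<le> x} \<subseteq> {..nat \<lceil>x\<rceil>}" by (auto simp: le_nat_iff) (metis ceiling_mono ceiling_of_nat)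
  then show ?thesis using finite_subset by blast
qed

lemma finite_le_real': "finite {r::nat. P r \<and> real r \<le> x}"
  by (rule finite_subset[OF _ finite_le_real[of x]]) auto

lemma Tacc_sum: "Tacc a \<alpha> n = (\<Sum>r\<in>{r\<in>RR a \<alpha>. r < n}. a r)"
proof (induction n)
  case 0 then show ?case by simp
next
  case (Suc n)
  show ?case
  proof (cases "n \<in> RR a \<alpha>")
    case True
    have e: "{r\<in>RR a \<alpha>. r < Suc n} = insert n {r\<in>RR a \<alpha>. r < n}" using True by auto
    have "Tacc a \<alpha> (Suc n) = Tacc a \<alpha> n + a n" using True by (simp add: RR_def)
    then show ?thesis using Suc by (simp add: e)
  next
    case False
    have e: "{r\<in>RR a \<alpha>. r < Suc n} = {r\<in>RR a \<alpha>. r < n}" using False by (auto simp: less_Suc_eq)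
    have "Tacc a \<alpha> (Suc n) = Tacc a \<alpha> n" using False by (auto simp: RR_def)
    then show ?thesis using Suc by (simp add: e)
  qed
qed

lemma SS_mono:
  assumes "\<And>p. prime p \<Longrightarrow> 0 \<le> a p" "t \<le> t'"
  shows "SS a t' x \<le> SS a t x"
  unfolding SS_def
  by (rule sum_mono2[OF finite_subset[OF _ finite_le_real[of x]]]) (use assms in auto)

lemma upper_bound:
  assumes a: "\<And>p. prime p \<Longrightarrow> 0 \<le> a p \<and> a p \<le> B" and "\<alpha> \<ge> 0" "x \<ge> 1" "B \<ge> 0"
  shows "(\<Sum>r\<in>{r\<in>RR a \<alpha>. real r \<le> x}. a r) \<le> \<alpha> * ln x + B"
proof (cases "{r\<in>RR a \<alpha>. real r \<le> x} = {}")
  case True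
  then show ?thesis using assms by (simp only: True) simp
next
  case False
  define Q where "Q = {r\<in>RR a \<alpha>. real r \<le> x}"
  have fin: "finite Q" unfolding Q_def by (rule finite_le_real')
  define p where "p = Max Q"
  have pQ: "p \<in> Q" using False fin unfolding p_def Q_def by (intro Max_in) auto
  have le: "\<And>r. r \<in> Q \<Longrightarrow> r \<le> p" using fin unfolding p_def by auto
  have Qe: "Q = insert p {r\<in>RR a \<alpha>. r < p}"
    using pQ le unfolding Q_def by (auto, fastforce)
  have "sum a Q = a p + Tacc a \<alpha> p"
    unfolding Qe Tacc_sum by (subst sum.insert) (auto intro: finite_subset[OF _ finite_lessThan[of p]])
  also have "Tacc a \<alpha> p < \<alpha> * ln p" using pQ by (auto simp: Q_def RR_def)
  also have "\<alpha> * ln p \<le> \<alpha> * ln x"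
    using pQ assms by (intro mult_left_mono) (auto simp: Q_def RR_def prime_gt_0_nat)
  also have "a p \<le> B" using a pQ by (auto simp: Q_def RR_def)
  finally show ?thesis unfolding Q_def by simp
qed

lemma lower_bound:
  assumes a: "\<And>p. prime p \<Longrightarrow> 0 \<le> a p" and "\<alpha> > 0" "x > 1"
    and hyp: "\<And>t. 1 \<le> t \<Longrightarrow> t \<le> x \<Longrightarrow> SS a t x \<ge> \<alpha>*(ln x - ln t) - D"
  shows "(\<Sum>r\<in>{r\<in>RR a \<alpha>. real r \<le> x}. a r) \<ge> \<alpha> * ln x - D"
proof -
  define P where "P = {t. prime t \<and> real t \<le> x \<and> t \<notin> RR a \<alpha>}"
  define Q where "Q = {r\<in>RR a \<alpha>. real r \<le> x}"
  have finQ: "finite Q" unfolding Q_def by (rule finite_le_real')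
  have nnQ: "\<And>r. r \<in> Q \<Longrightarrow> 0 \<le> a r" using a by (auto simp: Q_def RR_def)
  show ?thesis
  proof (cases "P = {}")
    case True
    have sub: "{p. prime p \<and> 1 < real p \<and> real p \<le> x} \<subseteq> Q"
      using True unfolding P_def Q_def by auto
    have "\<alpha> * ln x - D \<le> SS a 1 x" using hyp[of 1] assms by simp
    also have "SS a 1 x \<le> sum a Q" unfolding SS_def
      by (rule sum_mono2[OF finQ sub]) (use nnQ in auto)
    finally show ?thesis unfolding Q_def .
  next
    case False
    have finP: "finite P" unfolding P_def by (rule finite_subset[OF _ finite_le_real[of x]]) auto
    define t where "t = Max P"
    have tP: "t \<in> P" using False finP unfolding t_def by (intro Max_in) auto
    have le: "\<And>r. r \<in> P \<Longrightarrow> r \<le> t" using finP unfolding t_def by auto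
    have t1: "1 \<le> real t" using tP prime_ge_1_nat[of t] by (simp add: P_def)
    have tx: "real t \<le> x" using tP by (simp add: P_def)
    have A: "{r\<in>RR a \<alpha>. r < t} \<subseteq> Q"
    proof
      fix r assume "r \<in> {r\<in>RR a \<alpha>. r < t}"
      then have "r \<in> RR a \<alpha>" "real r \<le> real t" by auto
      then show "r \<in> Q" using tx unfolding Q_def by auto
    qed
    have B: "{p. prime p \<and> real t < real p \<and> real p \<le> x} \<subseteq> Q"
    proof
      fix p assume "p \<in> {p. prime p \<and> real t < real p \<and> real p \<le> x}"
      then have p: "prime p" "t < p" "real p \<le> x" by auto
      have "p \<notin> P" using le[of p] p(2) by linarith
      then have "p \<in> RR a \<alpha>" using p unfolding P_def by blast
      then show "p \<in> Q" using p unfolding Q_def by blast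
    qed
    have disj: "{r\<in>RR a \<alpha>. r < t} \<inter> {p. prime p \<and> real t < real p \<and> real p \<le> x} = {}" by auto
    have "\<alpha> * ln x - D = \<alpha> * ln t + (\<alpha> * (ln x - ln t) - D)" by (simp add: algebra_simps)
    also have "\<alpha> * ln t \<le> Tacc a \<alpha> t" using tP by (auto simp: P_def RR_def)
    also have "\<alpha> * (ln x - ln t) - D \<le> SS a t x" using hyp[OF t1] tP by (auto simp: P_def)
    also have "Tacc a \<alpha> t + SS a t x = sum a ({r\<in>RR a \<alpha>. r < t} \<union> {p. prime p \<and> real t < real p \<and> real p \<le> x})"
      unfolding Tacc_sum SS_def
      by (subst sum.union_disjoint) (use disj finite_subset[OF A finQ] finite_subset[OF B finQ] in auto)
    also have "\<dots> \<le> sum a Q"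
      by (rule sum_mono2[OF finQ]) (use A B nnQ in auto)
    finally show ?thesis unfolding Q_def by simp
  qed
qed

lemma SS_nonneg: "(\<And>p. prime p \<Longrightarrow> 0 \<le> a p) \<Longrightarrow> 0 \<le> SS a t x"
  unfolding SS_def by (rule sum_nonneg) auto

lemma grid:
  assumes a: "\<And>p. prime p \<Longrightarrow> 0 \<le> a p" and al: "\<alpha> > 0" and x: "x > 1" and N: "N \<ge> (2::nat)"
    and G: "\<And>j. j \<in> {1..N-1} \<Longrightarrow> SS a (x powr (real j / real N)) x \<ge> \<alpha> * (1 - real j / real N) * ln x"
    and t: "1 \<le> t" "t \<le> x"
  shows "SS a t x \<ge> \<alpha> * (ln x - ln t) - \<alpha> / real N * ln x"
proof -
  define u where "u = ln t / ln x"
  have lx: "ln x > 0" using x by simp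
  have lt: "ln t \<ge> 0" using t by simp
  have u0: "u \<ge> 0" using lx lt by (simp add: u_def)
  have ltu: "ln t = u * ln x" using lx by (simp add: u_def)
  define j where "j = nat \<lfloor>u * N\<rfloor>"
  have j1: "real j \<le> u * N" using u0 by (simp add: j_def)
  have j2: "u * N < real j + 1" using u0 by (simp add: j_def)
  have Npos: "real N > 0" using N by simp
  show ?thesis
  proof (cases "j + 2 \<le> N")
    case True
    have jm: "j + 1 \<in> {1..N-1}" using True by auto
    have "ln t < real (j+1) / real N * ln x"
    proof -
      have "(u * N) * ln x < (real j + 1) * ln x" using j2 lx by (rule mult_strict_right_mono)
      then show ?thesis using Npos by (simp add: ltu field_simps)
    qed
    then have "t < x powr (real (j+1) / real N)"
      using t x by (simp add: powr_def) (metis exp_less_cancel_iff exp_ln less_le_trans zero_less_one)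
    then have "SS a (x powr (real (j+1) / real N)) x \<le> SS a t x"
      by (intro SS_mono a) auto
    moreover have "\<alpha> * (1 - real (j+1) / real N) * ln x \<ge> \<alpha> * (ln x - ln t) - \<alpha> / real N * ln x"
    proof -
      have "real (j+1) / real N \<le> u + 1 / real N" using j1 Npos by (simp add: field_simps)
      then have "1 - real (j+1) / real N \<ge> 1 - u - 1 / real N" by simp
      then have "\<alpha> * ln x * (1 - real (j+1) / real N) \<ge> \<alpha> * ln x * (1 - u - 1 / real N)"
        using al lx by (intro mult_left_mono) auto
      then show ?thesis by (simp add: ltu algebra_simps)
    qed
    ultimately show ?thesis using G[OF jm] by linarith
  next
    case False
    then have "real j \<ge> real N - 1" by simp
    then have "u * N \<ge> N - 1" using j1 by linarith
    then have "u \<ge> 1 - 1 / real N" using Npos by (simp add: field_simps)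
    then have "\<alpha> * ln x * (1 - u - 1 / real N) \<le> 0"
      using al lx by (intro mult_nonneg_nonpos) auto
    then have "\<alpha> * (ln x - ln t) - \<alpha> / real N * ln x \<le> 0" by (simp add: ltu algebra_simps)
    then show ?thesis using SS_nonneg[of a, OF a] by (meson order_trans)
  qed
qed

theorem lemma5:
  fixes g :: "nat \<Rightarrow> real" and \<beta> c :: real
  assumes g_bounds: "\<And>p. prime p \<Longrightarrow> 0 \<le> g p \<and> g p \<le> \<beta>"
    and c_pos: "c > 0"
    and liminf: "\<And>\<epsilon>. 0 < \<epsilon> \<Longrightarrow> \<epsilon> < 1 \<Longrightarrow>
       Liminf at_top (\<lambda>x::real. ereal ((\<epsilon> * ln x) powr -1 *
          (\<Sum>p\<in>{p. prime p \<and> x powr (1 - \<epsilon>) < real p \<and> real p \<le> x}.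
              g p * ln (real p) / real p))) \<ge> ereal c"
  shows "\<forall>\<alpha>. 0 < \<alpha> \<and> \<alpha> < c \<longrightarrow>
    (\<exists>R. R \<subseteq> {p. prime p} \<and> infinite R \<and>
      ((\<lambda>x::real. (ln x) powr -1 *
          (\<Sum>r\<in>{r\<in>R. real r \<le> x}. g r * ln (real r) / real r)) \<longlongrightarrow> \<alpha>) at_top)"
proof (intro allI impI)
  fix \<alpha> :: real assume "0 < \<alpha> \<and> \<alpha> < c"
  then have al: "0 < \<alpha>" and ac: "\<alpha> < c" by auto
  define a where "a = (\<lambda>p::nat. g p * ln (real p) / real p)"
  have a_bd: "0 \<le> a p \<and> a p \<le> \<beta>" if "prime p" for p
  proof -
    have p1: "real p \<ge> 1" using that prime_ge_1_nat[of p] by simp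
    have l0: "0 \<le> ln (real p) / real p" using p1 by simp
    have l1: "ln (real p) / real p \<le> 1" using p1 ln_le_minus_one[of "real p"] by (simp add: divide_le_eq_1)
    have "a p = g p * (ln (real p) / real p)" by (simp add: a_def)
    moreover have "g p * (ln (real p) / real p) \<le> \<beta> * 1"
      using g_bounds[OF that] l0 l1 by (intro mult_mono) auto
    moreover have "0 \<le> g p * (ln (real p) / real p)" using g_bounds[OF that] l0 by (intro mult_nonneg_nonneg) auto
    ultimately show ?thesis by simp
  qed
  have a_nn: "\<And>p. prime p \<Longrightarrow> 0 \<le> a p" using a_bd by blast
  have b0: "\<beta> \<ge> 0" using g_bounds[of 2] by simp
  define R where "R = RR a \<alpha>"
  define T where "T = (\<lambda>x::real. (\<Sum>r\<in>{r\<in>R. real r \<le> x}. a r))"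
  have sumeq: "(\<Sum>r\<in>{r\<in>R. real r \<le> x}. g r * ln (real r) / real r) = T x" for x
    by (simp add: T_def a_def)
  have Rp: "R \<subseteq> {p. prime p}" by (auto simp: R_def RR_def)
  have key: "eventually (\<lambda>x. SS a (x powr \<theta>) x \<ge> \<alpha> * (1 - \<theta>) * ln x) at_top"
    if th: "0 < \<theta>" "\<theta> < 1" for \<theta>
  proof -
    have "ereal \<alpha> < Liminf at_top (\<lambda>x::real. ereal (((1-\<theta>) * ln x) powr -1 *
          (\<Sum>p\<in>{p. prime p \<and> x powr (1 - (1-\<theta>)) < real p \<and> real p \<le> x}.
              g p * ln (real p) / real p)))"
      by (rule less_le_trans[OF _ liminf[of "1-\<theta>"]]) (use th ac in auto)
    from less_LiminfD[OF this] have ev: "eventually (\<lambda>x. \<alpha> < ((1-\<theta>) * ln x) powr -1 * SS a (x powr \<theta>) x) at_top"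
      by (simp add: SS_def a_def)
    show ?thesis using ev eventually_gt_at_top[of 1]
    proof eventually_elim
      case (elim x)
      have pos: "(1-\<theta>) * ln x > 0" using elim th by simp
      then have "\<alpha> < SS a (x powr \<theta>) x / ((1-\<theta>) * ln x)" using elim by (simp add: field_simps)
      then show ?case using pos by (simp add: field_simps)
    qed
  qed
  have lower: "eventually (\<lambda>x. T x \<ge> \<alpha> * ln x - \<alpha> / real N * ln x) at_top" if N: "N \<ge> (2::nat)" for N
  proof -
    have "eventually (\<lambda>x. \<forall>j\<in>{1..N-1}. SS a (x powr (real j / real N)) x \<ge> \<alpha> * (1 - real j / real N) * ln x) at_top"
    proof (rule eventually_ball_finite)
      show "finite {1..N-1}" by simp
      show "\<forall>j\<in>{1..N-1}. eventually (\<lambda>x. SS a (x powr (real j / real N)) x \<ge> \<alpha> * (1 - real j / real N) * ln x) at_top"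
      proof
        fix j assume "j \<in> {1..N-1}"
        then have "0 < real j / real N" "real j / real N < 1" using N by auto
        then show "eventually (\<lambda>x. SS a (x powr (real j / real N)) x \<ge> \<alpha> * (1 - real j / real N) * ln x) at_top"
          by (rule key)
      qed
    qed
    then show ?thesis using eventually_gt_at_top[of 1]
    proof eventually_elim
      case (elim x)
      have "\<alpha> * ln x - \<alpha> / real N * ln x \<le> (\<Sum>r\<in>{r\<in>RR a \<alpha>. real r \<le> x}. a r)"
      proof (rule lower_bound[OF a_nn al])
        show "1 < x" using elim by simp
        fix t assume "1 \<le> t" "t \<le> x"
        from grid[where a=a, OF a_nn al \<open>1 < x\<close> N _ this] elim
        show "\<alpha> * (ln x - ln t) - \<alpha> / real N * ln x \<le> SS a t x" by blast
      qed
      then show ?case by (simp add: T_def R_def)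
    qed
  qed
  have upper: "T x \<le> \<alpha> * ln x + \<beta>" if "x \<ge> 1" for x
    unfolding T_def R_def by (rule upper_bound[OF a_bd]) (use al that b0 in auto)
  have lnbig: "eventually (\<lambda>x::real. ln x > M) at_top" for M
    using eventually_gt_at_top[of "exp M"]
    by eventually_elim (metis exp_gt_zero exp_less_cancel_iff exp_ln less_trans)
  show "\<exists>R. R \<subseteq> {p. prime p} \<and> infinite R \<and>
      ((\<lambda>x::real. (ln x) powr -1 *
          (\<Sum>r\<in>{r\<in>R. real r \<le> x}. g r * ln (real r) / real r)) \<longlongrightarrow> \<alpha>) at_top"
  proof (intro exI conjI)
    show "R \<subseteq> {p. prime p}" by (rule Rp)
    show "infinite R"
    proof
      assume fin: "finite R"
      define C where "C = sum a R"
      have TC: "T x \<le> C" for x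
        unfolding T_def C_def by (rule sum_mono2[OF fin]) (use Rp a_nn in auto)
      have "eventually (\<lambda>x. (\<alpha> * ln x - \<alpha> / real 2 * ln x \<le> T x) \<and> 2 * (C + 1) / \<alpha> < ln x \<and> 1 < x) at_top"
        using lower[OF order.refl[of "2::nat"]] lnbig[of "2 * (C + 1) / \<alpha>"] eventually_gt_at_top[of 1]
        by (intro eventually_conj)
      then obtain x0 where "\<forall>x\<ge>x0. (\<alpha> * ln x - \<alpha> / real 2 * ln x \<le> T x) \<and> 2 * (C + 1) / \<alpha> < ln x \<and> 1 < x"
        by (auto simp: eventually_at_top_linorder)
      then have elim: "\<alpha> * ln x0 - \<alpha> / real 2 * ln x0 \<le> T x0" "2 * (C + 1) / \<alpha> < ln x0" by auto
      have "\<alpha> * ln x0 > 2 * (C + 1)" using elim al by (simp add: field_simps)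
      then show False using elim TC[of x0] by simp
    qed
    show "((\<lambda>x::real. (ln x) powr -1 *
          (\<Sum>r\<in>{r\<in>R. real r \<le> x}. g r * ln (real r) / real r)) \<longlongrightarrow> \<alpha>) at_top"
      unfolding sumeq
    proof (rule tendstoI)
      fix e :: real assume e: "e > 0"
      define N where "N = nat \<lceil>\<alpha> / e\<rceil> + 2"
      have N2: "N \<ge> 2" by (simp add: N_def)
      have "\<alpha> / e < real N" unfolding N_def by linarith
      then have aN: "\<alpha> / real N < e" using e N2 by (simp add: field_simps)
      show "eventually (\<lambda>x. dist (ln x powr -1 * T x) \<alpha> < e) at_top"
        using lower[OF N2] lnbig[of "\<beta> / e"] eventually_gt_at_top[of 1]
      proof eventually_elim
        case (elim x)
        have lx: "ln x > 0" using elim by simp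
        have q: "ln x powr -1 * T x = T x / ln x" using lx by simp
        have u: "T x / ln x \<le> \<alpha> + \<beta> / ln x"
          using upper[of x] elim lx by (simp add: field_simps)
        have bl: "\<beta> / ln x < e" using elim lx e by (simp add: field_simps)
        have l: "T x / ln x \<ge> \<alpha> - \<alpha> / real N"
          using elim lx by (simp add: field_simps)
        show ?case unfolding q dist_real_def using u bl l aN by (simp add: abs_less_iff)
      qed
    qed
  qed
qed

end
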